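(* Let $r,p\in\mathbb{C}$ with $0<|r|,|p|<1$ and $a,z\in\mathbb{C}^\times$ generic (so that all expressions are defined). Then \begin{align*} \Omega_a(z;r,p)&=\Omega_a(z^{-1};r,p)\frac{\theta_0(z^{-1}a;p)\,\theta_0(za^{-1};r)}{\theta_0(z^{-1}a^{-1};p)\,\theta_0(za;r)},\\ \Omega_a(pz;r,p)&=\frac{\theta_0(za;r)}{\theta_0(za^{-1};r)}\Omega_a(z;r,p),\\ \Omega_a(p^{-1}z;r,p)&=\frac{\theta_0(za^{-1}p^{-1};r)}{\theta_0(zap^{-1};r)}\Omega_a(z;r,p). \end{align*}
   Context: $(u;q)=\prod_{n\ge0}(1-uq^n)$, $(u;r,p)=\prod_{n,m\ge0}(1-ur^np^m)$, $\theta_0(u;q)=(u;q)(qu^{-1};q)$, and the phase function is $\Omega_a(z;r,p)=\frac{(za^{-1};r,p)(z^{-1}a^{-1}rp;r,p)}{(za;r,p)(z^{-1}arp;r,p)}$. *)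

theory Defs
  imports "HOL-Analysis.Analysis"
begin

definition qpoch :: "complex \<Rightarrow> complex \<Rightarrow> complex" where
  "qpoch u q = (\<Prod>n. 1 - u * q ^ n)"

definition qpoch2 :: "complex \<Rightarrow> complex \<Rightarrow> complex \<Rightarrow> complex" where
  "qpoch2 u r p = (\<Prod>n. \<Prod>m. 1 - u * r ^ n * p ^ m)"

definition theta0 :: "complex \<Rightarrow> complex \<Rightarrow> complex" where
  "theta0 u q = qpoch u q * qpoch (q / u) q"

definition Omega :: "complex \<Rightarrow> complex \<Rightarrow> complex \<Rightarrow> complex \<Rightarrow> complex" where
  "Omega a z r p =
     (qpoch2 (z / a) r p * qpoch2 (r * p / (z * a)) r p) /
     (qpoch2 (z * a) r p * qpoch2 (a * r * p / z) r p)"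

end

theory Submission
  imports Defs
begin

lemma qpoch_conv:
  fixes u q :: complex
  assumes "norm q < 1"
  shows "convergent_prod (\<lambda>n. 1 - u * q ^ n)"
proof -
  have "summable (\<lambda>n. norm u * norm q ^ n)"
    using assms by (intro summable_mult summable_geometric) simp
  moreover have "(\<lambda>n. norm ((1 - u * q ^ n) - 1)) = (\<lambda>n. norm u * norm q ^ n)"
    by (simp add: norm_mult norm_power fun_eq_iff)
  ultimately have "summable (\<lambda>n. norm ((1 - u * q ^ n) - 1))"
    by simp
  thus ?thesis
    by (intro abs_convergent_prod_imp_convergent_prod summable_imp_abs_convergent_prod)
qed

lemma qpoch_bound:
  assumes "norm q < 1"
  shows "norm (qpoch w q - 1) \<le> exp (norm w / (1 - norm q)) - 1"
proof -
  let ?s = "norm w / (1 - norm q)"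
  have L: "(\<lambda>n. \<Prod>i\<le>n. 1 - w * q ^ i) \<longlonglongrightarrow> qpoch w q"
    unfolding qpoch_def by (rule convergent_prod_LIMSEQ[OF qpoch_conv[OF assms]])
  have B: "\<forall>n. norm ((\<Prod>i\<le>n. 1 - w * q ^ i) - 1) \<le> exp ?s - 1"
  proof
    fix n
    have i1: "norm ((\<Prod>i\<le>n. 1 + (- (w * q ^ i))) - 1) \<le> (\<Prod>i\<le>n. 1 + norm (- (w * q ^ i))) - 1"
      by (rule norm_prod_minus1_le_prod_minus1)
    have i2: "(\<Prod>i\<le>n. 1 + norm (- (w * q ^ i))) \<le> exp (\<Sum>i\<le>n. norm (- (w * q ^ i)))"
      by (rule prod_le_exp_sum) auto
    have e: "(\<Sum>i\<le>n. norm (- (w * q ^ i))) = (\<Sum>i\<le>n. norm w * norm q ^ i)"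
      by (simp add: norm_mult norm_power)
    have sm: "summable (\<lambda>i. norm w * norm q ^ i)" using assms by (intro summable_mult summable_geometric) simp
    have i3: "(\<Sum>i\<le>n. norm w * norm q ^ i) \<le> (\<Sum>i. norm w * norm q ^ i)"
      unfolding lessThan_Suc_atMost[symmetric] by (rule sum_le_suminf[OF sm]) auto
    have e2: "(\<Sum>i. norm w * norm q ^ i) = ?s" using assms
      by (simp add: suminf_mult suminf_geometric divide_simps summable_geometric)
    have i4: "exp (\<Sum>i\<le>n. norm (- (w * q ^ i))) \<le> exp ?s"
      using i3 e e2 by simp
    have e3: "(\<Prod>i\<le>n. 1 + (- (w * q ^ i))) = (\<Prod>i\<le>n. 1 - w * q ^ i)" by simp
    show "norm ((\<Prod>i\<le>n. 1 - w * q ^ i) - 1) \<le> exp ?s - 1"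
      using i1 i2 i4 unfolding e3 by linarith
  qed
  have T: "(\<lambda>n. norm ((\<Prod>i\<le>n. 1 - w * q ^ i) - 1)) \<longlonglongrightarrow> norm (qpoch w q - 1)"
    by (intro tendsto_intros L)
  show ?thesis using LIMSEQ_le_const2[OF T] B by blast
qed

lemma exp_minus1_le: "(s::real) \<ge> 0 \<Longrightarrow> exp s - 1 \<le> s * exp s"
proof -
  assume "s \<ge> 0"
  have "1 - s \<le> exp (-s)" using exp_ge_add_one_self[of "-s"] by simp
  hence "(1 - s) * exp s \<le> exp (-s) * exp s" by (intro mult_right_mono) auto
  thus ?thesis by (simp add: exp_minus field_simps)
qed

lemma qpoch2_conv:
  assumes "norm r < 1" "norm p < 1"
  shows "convergent_prod (\<lambda>n. qpoch (u * r ^ n) p)"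
proof -
  define S where "S = norm u / (1 - norm p)"
  have S0: "0 \<le> S" unfolding S_def using assms by simp
  have bnd: "norm (norm (qpoch (u * r ^ n) p - 1)) \<le> (S * exp S) * norm r ^ n" for n
  proof -
    define s where "s = norm (u * r ^ n) / (1 - norm p)"
    have s0: "0 \<le> s" unfolding s_def using assms by simp
    have rn: "norm r ^ n \<le> 1" using assms by (simp add: power_le_one)
    have "norm u * norm r ^ n \<le> norm u" using rn by (rule mult_left_le) simp
    hence "norm (u * r ^ n) \<le> norm u" by (simp add: norm_mult norm_power)
    hence sS: "s \<le> S" unfolding s_def S_def using assms by (intro divide_right_mono) auto
    have se: "s = S * norm r ^ n" unfolding s_def S_def by (simp add: norm_mult norm_power)
    have i1: "norm (qpoch (u * r ^ n) p - 1) \<le> exp s - 1" unfolding s_def by (rule qpoch_bound[OF assms(2)])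
    have i2: "exp s - 1 \<le> s * exp s" using exp_minus1_le[OF s0] .
    have i3: "s * exp s \<le> s * exp S" using s0 sS by (intro mult_left_mono) auto
    have "norm (qpoch (u * r ^ n) p - 1) \<le> s * exp S" using i1 i2 i3 by linarith
    also have "s * exp S = (S * exp S) * norm r ^ n" unfolding se by (simp only: ac_simps)
    finally show ?thesis by simp
  qed
  have sm: "summable (\<lambda>n. (S * exp S) * norm r ^ n)"
    using assms by (intro summable_mult summable_geometric) simp
  have "summable (\<lambda>n. norm (qpoch (u * r ^ n) p - 1))"
    by (rule summable_comparison_test[OF _ sm]) (use bnd in blast)
  thus ?thesis
    by (intro abs_convergent_prod_imp_convergent_prod summable_imp_abs_convergent_prod)
qed

lemma qpoch_head:
  assumes "norm q < 1"
  shows "qpoch u q = (1 - u) * qpoch (u * q) q"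
proof -
  have "(\<lambda>n. 1 - u * q ^ n) has_prod ((\<Prod>k<1. 1 - u * q ^ k) * (\<Prod>k. 1 - u * q ^ (k + 1)))"
    by (rule has_prod_ignore_initial_segment'[OF qpoch_conv[OF assms]])
  thus ?thesis unfolding qpoch_def
    by (simp add: has_prod_iff ac_simps)
qed

lemma qpoch2_alt: "qpoch2 u r p = (\<Prod>n. qpoch (u * r ^ n) p)"
  unfolding qpoch2_def qpoch_def by (simp add: mult.assoc)

lemma qpoch2_B:
  assumes "norm r < 1" "norm p < 1"
  shows "qpoch2 u r p = qpoch u p * qpoch2 (r * u) r p"
proof -
  have h: "(\<lambda>n. qpoch (u * r ^ n) p) has_prod ((\<Prod>k<1. qpoch (u * r ^ k) p) * (\<Prod>k. qpoch (u * r ^ (k + 1)) p))"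
    by (rule has_prod_ignore_initial_segment'[OF qpoch2_conv[OF assms]])
  have e1: "(\<Prod>k<1. qpoch (u * r ^ k) p) = qpoch u p" by simp
  have e2: "(\<lambda>k. qpoch (u * r ^ (k + 1)) p) = (\<lambda>k. qpoch (r * u * r ^ k) p)"
    by (rule ext) (simp add: mult_ac)
  have "(\<lambda>n. qpoch (u * r ^ n) p) has_prod (qpoch u p * qpoch2 (r * u) r p)"
    using h unfolding e1 e2 qpoch2_alt[of "r*u"] .
  from has_prod_unique[OF this] show ?thesis unfolding qpoch2_alt[of u] by (rule sym)
qed

lemma qpoch2_A:
  assumes "norm r < 1" "norm p < 1"
  shows "qpoch2 u r p = qpoch u r * qpoch2 (p * u) r p"
proof -
  have c1: "convergent_prod (\<lambda>n. 1 - u * r ^ n)" by (rule qpoch_conv[OF assms(1)])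
  have c2: "convergent_prod (\<lambda>n. qpoch (p * u * r ^ n) p)" by (rule qpoch2_conv[OF assms])
  have "qpoch u r * qpoch2 (p * u) r p = (\<Prod>n. (1 - u * r ^ n) * qpoch (p * u * r ^ n) p)"
    unfolding qpoch_def[of u r] qpoch2_alt by (rule prodinf_mult[OF c1 c2])
  also have "(\<lambda>n. (1 - u * r ^ n) * qpoch (p * u * r ^ n) p) = (\<lambda>n. qpoch (u * r ^ n) p)"
  proof (rule ext)
    fix n
    have "qpoch (u * r ^ n) p = (1 - u * r ^ n) * qpoch (u * r ^ n * p) p"
      by (rule qpoch_head[OF assms(2)])
    also have "u * r ^ n * p = p * u * r ^ n" by (simp only: mult_ac)
    finally show "(1 - u * r ^ n) * qpoch (p * u * r ^ n) p = qpoch (u * r ^ n) p" by simp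
  qed
  finally show ?thesis unfolding qpoch2_alt by simp
qed

lemma qpoch2_A':
  assumes "norm r < 1" "norm p < 1" "v = p * u"
  shows "qpoch2 u r p = qpoch u r * qpoch2 v r p"
  using qpoch2_A[OF assms(1,2), of u] assms(3) by simp

lemma qpoch2_C:
  assumes "norm r < 1" "norm p < 1" "v1 = p * u" "v2 = r * p * u"
  shows "qpoch2 u r p = qpoch u r * qpoch v1 p * qpoch2 v2 r p"
proof -
  have "qpoch2 u r p = qpoch u r * qpoch2 (p * u) r p" by (rule qpoch2_A[OF assms(1,2)])
  also have "qpoch2 (p * u) r p = qpoch (p * u) p * qpoch2 (r * (p * u)) r p"
    by (rule qpoch2_B[OF assms(1,2)])
  finally show ?thesis using assms(3,4) by (simp add: ac_simps)
qed

lemma qpoch2_C':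
  assumes "norm r < 1" "norm p < 1" "v1 = r * u" "v2 = r * p * u"
  shows "qpoch2 u r p = qpoch u p * qpoch v1 r * qpoch2 v2 r p"
proof -
  have "qpoch2 u r p = qpoch u p * qpoch2 (r * u) r p" by (rule qpoch2_B[OF assms(1,2)])
  also have "qpoch2 (r * u) r p = qpoch (r * u) r * qpoch2 (p * (r * u)) r p"
    by (rule qpoch2_A[OF assms(1,2)])
  finally show ?thesis using assms(3,4) by (simp add: ac_simps)
qed

lemma theta_exp:
  assumes "u' = u" "v = q / u"
  shows "theta0 u' q = qpoch u q * qpoch v q"
  using assms by (simp add: theta0_def)

lemma alg4:
  fixes A B C E N1 N2 M1 M2 :: complex
  assumes "C \<noteq> 0" "E \<noteq> 0"
  shows "((N1 * (B*N2)) / (M1 * (E*M2))) * (A*E) = (C*B) * (((A*N1)*N2) / ((C*M1)*M2))"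
proof (cases "M1 * M2 = 0")
  case True thus ?thesis by auto
next
  case False thus ?thesis using assms by (simp add: field_simps)
qed

lemma omega_shift:
  fixes r p a w :: complex
  assumes "norm r < 1" "norm p < 1" "p \<noteq> 0" "a \<noteq> 0" "w \<noteq> 0"
    "qpoch2 (w*a) r p \<noteq> 0" "qpoch2 (a*r*p/w) r p \<noteq> 0"
    "qpoch2 (p*w*a) r p \<noteq> 0" "qpoch2 (a*r*p/(p*w)) r p \<noteq> 0"
  shows "Omega a (p*w) r p * theta0 (w/a) r = theta0 (w*a) r * Omega a w r p"
proof -
  note nz = assms(3-5)
  have N1: "qpoch2 (w/a) r p = qpoch (w/a) r * qpoch2 (p*w/a) r p"
    by (rule qpoch2_A'[OF assms(1,2)]) simp
  have N2: "qpoch2 (r*p/(p*w*a)) r p = qpoch (r*p/(p*w*a)) r * qpoch2 (r*p/(w*a)) r p"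
    by (rule qpoch2_A'[OF assms(1,2)]) (use nz in \<open>simp add: field_simps\<close>)
  have M1: "qpoch2 (w*a) r p = qpoch (w*a) r * qpoch2 (p*w*a) r p"
    by (rule qpoch2_A'[OF assms(1,2)]) simp
  have M2: "qpoch2 (a*r*p/(p*w)) r p = qpoch (a*r*p/(p*w)) r * qpoch2 (a*r*p/w) r p"
    by (rule qpoch2_A'[OF assms(1,2)]) (use nz in \<open>simp add: field_simps\<close>)
  have T1: "theta0 (w/a) r = qpoch (w/a) r * qpoch (a*r*p/(p*w)) r"
    by (rule theta_exp) (use nz in \<open>simp_all add: field_simps\<close>)
  have T2: "theta0 (w*a) r = qpoch (w*a) r * qpoch (r*p/(p*w*a)) r"
    by (rule theta_exp) (use nz in \<open>simp_all add: field_simps\<close>)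
  have z1: "qpoch (w*a) r \<noteq> 0" using M1 assms(6) by auto
  have z2: "qpoch (a*r*p/(p*w)) r \<noteq> 0" using M2 assms(9) by auto
  have e1: "p * w / a = p*w/a" by simp
  show ?thesis
    unfolding Omega_def T1 T2 N1 M1 N2 M2
    by (rule alg4[OF z1 z2])
qed

lemma alg1:
  fixes a1 b1 c1 d1 e1 f1 g1 h1 K1 K2 N2 M2 :: complex
  assumes "g1 \<noteq> 0" "h1 \<noteq> 0" "e1 \<noteq> 0" "f1 \<noteq> 0" "c1 \<noteq> 0" "d1 \<noteq> 0" "K2 \<noteq> 0" "M2 \<noteq> 0"
  shows "(a1*b1*K1*N2)/((c1*d1*K2)*M2) =
     ((e1*f1*N2)*K1)/((g1*h1*M2)*K2) * ((g1*b1)*(a1*h1)) / ((e1*d1)*(c1*f1))"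
proof -
  have X: "e1*f1*g1*h1 \<noteq> 0" using assms by simp
  have "((e1*f1*N2)*K1)/((g1*h1*M2)*K2) * ((g1*b1)*(a1*h1)) / ((e1*d1)*(c1*f1))
      = (((e1*f1*N2)*K1) * ((g1*b1)*(a1*h1))) / (((g1*h1*M2)*K2) * ((e1*d1)*(c1*f1)))"
    by (simp add: times_divide_eq_left divide_divide_eq_left)
  also have "\<dots> = ((a1*b1*K1*N2) * (e1*f1*g1*h1)) / (((c1*d1*K2)*M2) * (e1*f1*g1*h1))"
    by (simp only: ac_simps)
  also have "\<dots> = (a1*b1*K1*N2)/((c1*d1*K2)*M2)"
    using X by (rule mult_divide_mult_cancel_right)
  finally show ?thesis by simp
qed

lemma alg2:
  fixes x y A B :: complex
  assumes "x * A = B * y" "A \<noteq> 0"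
  shows "x = B / A * y"
  using assms by (simp add: field_simps)

lemma alg3:
  fixes x y A B :: complex
  assumes "y * B = A * x" "A \<noteq> 0"
  shows "x = B / A * y"
  using assms by (simp add: field_simps)

theorem lemmaA3:
  fixes r p a z :: complex
  assumes "0 < norm r" "norm r < 1" "0 < norm p" "norm p < 1"
    and "a \<noteq> 0" "z \<noteq> 0"
    and "\<And>w. w \<in> {z, inverse z, p * z, z / p} \<Longrightarrow>
            qpoch2 (w * a) r p \<noteq> 0 \<and> qpoch2 (a * r * p / w) r p \<noteq> 0"
    and "theta0 (a / z) p \<noteq> 0" "theta0 (inverse (z * a)) p \<noteq> 0"
    and "theta0 (z * a) r \<noteq> 0" "theta0 (z / a) r \<noteq> 0"
    and "theta0 (z * a / p) r \<noteq> 0" "theta0 (z / (a * p)) r \<noteq> 0"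
  shows "Omega a z r p = Omega a (inverse z) r p *
           (theta0 (inverse z * a) p * theta0 (z * inverse a) r) /
           (theta0 (inverse z * inverse a) p * theta0 (z * a) r) \<and>
         Omega a (p * z) r p = theta0 (z * a) r / theta0 (z * inverse a) r * Omega a z r p \<and>
         Omega a (inverse p * z) r p =
           theta0 (z * inverse a * inverse p) r / theta0 (z * a * inverse p) r * Omega a z r p"
proof -
  have r1: "norm r < 1" and p1: "norm p < 1" and p0: "p \<noteq> 0" and r0: "r \<noteq> 0"
    using assms(1-4) by auto
  note az = assms(5,6)
  have H: "qpoch2 (w * a) r p \<noteq> 0" "qpoch2 (a * r * p / w) r p \<noteq> 0"
    if "w \<in> {z, inverse z, p * z, z / p}" for w using assms(7)[OF that] by auto
  have S2: "Omega a (p*z) r p * theta0 (z/a) r = theta0 (z*a) r * Omega a z r p"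
    by (rule omega_shift[OF r1 p1 p0 az(1) az(2)]) (use H[of z] H[of "p*z"] in auto)
  have P2: "Omega a (p * z) r p = theta0 (z * a) r / theta0 (z * inverse a) r * Omega a z r p"
  proof -
    have "z * inverse a = z / a" by (simp add: divide_inverse)
    thus ?thesis using alg2[OF S2 assms(11)] by simp
  qed
  have w0: "inverse p * z \<noteq> 0" using p0 az by simp
  have h1: "qpoch2 (inverse p * z * a) r p \<noteq> 0"
  proof -
    have "inverse p * z * a = z / p * a" by (simp add: field_simps)
    thus ?thesis using H(1)[of "z/p"] by simp
  qed
  have h2: "qpoch2 (a * r * p / (inverse p * z)) r p \<noteq> 0"
  proof -
    have "a * r * p / (inverse p * z) = a * r * p / (z / p)" by (simp add: field_simps)
    thus ?thesis using H(2)[of "z/p"] by simp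
  qed
  have ee1: "p * (inverse p * z) * a = z * a" using p0 by (simp add: field_simps)
  have ee2: "a * r * p / (p * (inverse p * z)) = a * r * p / z" using p0 by (simp add: field_simps)
  have h3: "qpoch2 (p * (inverse p * z) * a) r p \<noteq> 0"
    unfolding ee1 using H(1)[of z] by simp
  have h4: "qpoch2 (a * r * p / (p * (inverse p * z))) r p \<noteq> 0"
    unfolding ee2 using H(2)[of z] by simp
  have S3: "Omega a (p*(inverse p * z)) r p * theta0 (inverse p * z/a) r
      = theta0 (inverse p * z*a) r * Omega a (inverse p * z) r p"
    by (rule omega_shift[OF r1 p1 p0 az(1) w0 h1 h2 h3 h4])
  have e1: "p*(inverse p * z) = z" using p0 by simp
  have e2: "inverse p * z/a = z * inverse a * inverse p" by (simp add: field_simps)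
  have e3: "inverse p * z*a = z * a * inverse p" by (simp add: field_simps)
  have t3: "theta0 (z * a * inverse p) r \<noteq> 0"
  proof -
    have "z * a * inverse p = z * a / p" by (simp add: field_simps)
    thus ?thesis using assms(12) by simp
  qed
  have P3: "Omega a (inverse p * z) r p =
           theta0 (z * inverse a * inverse p) r / theta0 (z * a * inverse p) r * Omega a z r p"
  proof -
    have S3': "Omega a z r p * theta0 (z * inverse a * inverse p) r =
       theta0 (z * a * inverse p) r * Omega a (inverse p * z) r p"
      using S3 unfolding e1 e2 e3 .
    show ?thesis by (rule alg3[OF S3' t3])
  qed
  have zi: "inverse z \<noteq> 0" using az by simp
  have A1: "qpoch2 (z/a) r p = qpoch (z/a) r * qpoch (p/(inverse z * a)) p * qpoch2 (r*p/(inverse z * a)) r p"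
    by (rule qpoch2_C[OF r1 p1]) (use az in \<open>simp_all add: field_simps\<close>)
  have A2: "qpoch2 (z*a) r p = qpoch (z*a) r * qpoch (p*z*a) p * qpoch2 (a*r*p/(inverse z)) r p"
    by (rule qpoch2_C[OF r1 p1]) (use az in \<open>simp_all add: field_simps\<close>)
  have A3: "qpoch2 (inverse z/a) r p = qpoch (inverse z/a) p * qpoch (r/(z*a)) r * qpoch2 (r*p/(z*a)) r p"
    by (rule qpoch2_C'[OF r1 p1]) (use az in \<open>simp_all add: field_simps\<close>)
  have A4: "qpoch2 (inverse z*a) r p = qpoch (inverse z*a) p * qpoch (r/(z/a)) r * qpoch2 (a*r*p/z) r p"
    by (rule qpoch2_C'[OF r1 p1]) (use az in \<open>simp_all add: field_simps\<close>)
  have T1: "theta0 (inverse z * a) p = qpoch (inverse z*a) p * qpoch (p/(inverse z * a)) p"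
    by (rule theta_exp) simp_all
  have T2: "theta0 (z * inverse a) r = qpoch (z/a) r * qpoch (r/(z/a)) r"
    by (rule theta_exp) (simp_all add: field_simps)
  have T3: "theta0 (inverse z * inverse a) p = qpoch (inverse z/a) p * qpoch (p*z*a) p"
    by (rule theta_exp) (use az in \<open>simp_all add: field_simps\<close>)
  have T4: "theta0 (z * a) r = qpoch (z*a) r * qpoch (r/(z*a)) r"
    by (rule theta_exp) simp_all
  have T3': "theta0 (inverse (z * a)) p = theta0 (inverse z * inverse a) p"
    by (simp add: ac_simps)
  have n1: "qpoch2 (z * a) r p \<noteq> 0" "qpoch2 (a * r * p / z) r p \<noteq> 0"
    using H[of z] by auto
  have n2: "qpoch2 (inverse z * a) r p \<noteq> 0" "qpoch2 (a * r * p / inverse z) r p \<noteq> 0"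
    using H[of "inverse z"] by auto
  have n3: "theta0 (inverse z * inverse a) p \<noteq> 0" using assms(9) T3' by simp
  have n4: "theta0 (z * a) r \<noteq> 0" by (rule assms(10))
  have q1: "qpoch (inverse z*a) p \<noteq> 0" "qpoch (r/(z/a)) r \<noteq> 0" using n2(1) A4 by auto
  have q2: "qpoch (inverse z/a) p \<noteq> 0" "qpoch (p*z*a) p \<noteq> 0" using n3 T3 by auto
  have q3: "qpoch (z*a) r \<noteq> 0" "qpoch (r/(z*a)) r \<noteq> 0" using n4 T4 by auto
  have e4: "r * p / (inverse z * a) = r*p/(inverse z * a)" by simp
  have P1: "Omega a z r p = Omega a (inverse z) r p *
           (theta0 (inverse z * a) p * theta0 (z * inverse a) r) /
           (theta0 (inverse z * inverse a) p * theta0 (z * a) r)"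
    unfolding Omega_def T1 T2 T3 T4 A1 A2 A3 A4
    by (rule alg1) (use q1 q2 q3 n1 n2 in auto)
  show ?thesis using P1 P2 P3 by blast
qed

end
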